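(* Let $\ell\ge2$, $r_0,\dots,r_\ell\ge1$ integers, $d_0,\dots,d_\ell$ integers with $d_V=\sum_kd_k=0$, and $\mathbf{g}\ge1$ an integer. Then, as $c\to+\infty$, the quantity $\mathring{\mathfrak{F}}(c)$ defined in the context has an asymptotic expansion $$\mathring{\mathfrak{F}}(c)=(\mu_0-\mu_1)\Big(Fut_1\,c+Fut_2+\frac{Fut_3}{c}+\frac{Fut_4}{c^2}+\cdots\Big),$$ where the real coefficients $Fut_i$ depend only on the $r_k$, $d_k$ and $\mathbf{g}$, and $$Fut_1=\frac{2\pi_R^2r_Vr_0r_1}{(r_V-1)!(r_V+1)!(r_0+r_1)}>0,\qquad Fut_2=\frac{2r_0r_1\pi_R^2}{(r_V-1)!(r_V+2)!(r_0+r_1)}\big[(r_V+2)(\mathbf{g}-1)+2r_V\mu_{01}\big],$$ with $\mu_{01}=\frac{d_0+d_1}{r_0+r_1}$.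
   Context: $\mu_k=d_k/r_k$, $r_V=\sum_kr_k$, $\pi_R=\prod_k(r_k-1)!$, $c$ real with $c>\max_k\mu_k$. For $1\le j\ne k\le\ell$: $\alpha_0=\frac{\pi_R}{r_V!}(cr_V-d_V)$, $\alpha_j=\frac{\pi_R}{(r_V+1)!}r_j(c(r_V+1)-d_V-\mu_j)$, $\alpha_{jk}=\frac{\pi_R}{(r_V+2)!}r_jr_k(c(r_V+2)-d_V-\mu_j-\mu_k)$, $\alpha_{jj}=\frac{\pi_R}{(r_V+2)!}r_j(r_j+1)(c(r_V+2)-d_V-2\mu_j)$, $\beta_0=\frac{\pi_R}{(r_V-1)!}((r_V-1)r_Vc+2(1-\mathbf{g})-(r_V-1)d_V)$, $\beta_j=\frac{\pi_Rr_j}{r_V!}(r_V(r_V-1)c+2(1-\mathbf{g})-d_V(r_V-2)-r_V\mu_j)$. $A$ is the $(\ell-1)\times(\ell-1)$ matrix $A_{ij}=\alpha_{ij}-\alpha_i\alpha_j/\alpha_0$, $2\le i,j\le\ell$ (invertible for $c>\max\mu_k$), and $\mathring{\mathfrak{F}}(c)=(\alpha_0\beta_1-\alpha_1\beta_0)-\sum_{j,r=2}^\ell(A^{-1})_{rj}(\alpha_0\beta_r-\alpha_r\beta_0)\big(\alpha_{j1}-\frac{\alpha_1\alpha_j}{\alpha_0}\big)$. *)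

theory Defs
  imports Complex_Main "HOL-Library.Landau_Symbols" "Jordan_Normal_Form.Gauss_Jordan_Elimination"
begin

definition mu :: "(nat \<Rightarrow> nat) \<Rightarrow> (nat \<Rightarrow> int) \<Rightarrow> nat \<Rightarrow> real" where
  "mu r d k = real_of_int (d k) / real (r k)"

definition rV :: "nat \<Rightarrow> (nat \<Rightarrow> nat) \<Rightarrow> nat" where
  "rV l r = (\<Sum>k\<le>l. r k)"

definition dV :: "nat \<Rightarrow> (nat \<Rightarrow> int) \<Rightarrow> real" where
  "dV l d = real_of_int (\<Sum>k\<le>l. d k)"

definition piR :: "nat \<Rightarrow> (nat \<Rightarrow> nat) \<Rightarrow> real" where
  "piR l r = (\<Prod>k\<le>l. fact (r k - 1))"

definition alpha0 :: "nat \<Rightarrow> (nat \<Rightarrow> nat) \<Rightarrow> (nat \<Rightarrow> int) \<Rightarrow> real \<Rightarrow> real" where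
  "alpha0 l r d c = piR l r / fact (rV l r) * (c * real (rV l r) - dV l d)"

definition alpha1 :: "nat \<Rightarrow> (nat \<Rightarrow> nat) \<Rightarrow> (nat \<Rightarrow> int) \<Rightarrow> real \<Rightarrow> nat \<Rightarrow> real" where
  "alpha1 l r d c j = piR l r / fact (rV l r + 1) * real (r j)
     * (c * (real (rV l r) + 1) - dV l d - mu r d j)"

definition alpha2 :: "nat \<Rightarrow> (nat \<Rightarrow> nat) \<Rightarrow> (nat \<Rightarrow> int) \<Rightarrow> real \<Rightarrow> nat \<Rightarrow> nat \<Rightarrow> real" where
  "alpha2 l r d c j k =
     (if j = k then piR l r / fact (rV l r + 2) * real (r j) * (real (r j) + 1)
                      * (c * (real (rV l r) + 2) - dV l d - 2 * mu r d j)
      else piR l r / fact (rV l r + 2) * real (r j) * real (r k)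
                      * (c * (real (rV l r) + 2) - dV l d - mu r d j - mu r d k))"

definition beta0 :: "nat \<Rightarrow> (nat \<Rightarrow> nat) \<Rightarrow> (nat \<Rightarrow> int) \<Rightarrow> int \<Rightarrow> real \<Rightarrow> real" where
  "beta0 l r d g c = piR l r / fact (rV l r - 1)
     * ((real (rV l r) - 1) * real (rV l r) * c + 2 * (1 - real_of_int g)
        - (real (rV l r) - 1) * dV l d)"

definition beta1 :: "nat \<Rightarrow> (nat \<Rightarrow> nat) \<Rightarrow> (nat \<Rightarrow> int) \<Rightarrow> int \<Rightarrow> real \<Rightarrow> nat \<Rightarrow> real" where
  "beta1 l r d g c j = piR l r * real (r j) / fact (rV l r)
     * (real (rV l r) * (real (rV l r) - 1) * c + 2 * (1 - real_of_int g)
        - dV l d * (real (rV l r) - 2) - real (rV l r) * mu r d j)"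

text \<open>The (l-1)x(l-1) matrix A, with row/column index i (0-based) standing for vertex i+2.\<close>
definition Amat :: "nat \<Rightarrow> (nat \<Rightarrow> nat) \<Rightarrow> (nat \<Rightarrow> int) \<Rightarrow> real \<Rightarrow> real mat" where
  "Amat l r d c = mat (l - 1) (l - 1) (\<lambda>(i, j).
      alpha2 l r d c (i + 2) (j + 2)
      - alpha1 l r d c (i + 2) * alpha1 l r d c (j + 2) / alpha0 l r d c)"

definition Fring :: "nat \<Rightarrow> (nat \<Rightarrow> nat) \<Rightarrow> (nat \<Rightarrow> int) \<Rightarrow> int \<Rightarrow> real \<Rightarrow> real" where
  "Fring l r d g c =
     (let a0 = alpha0 l r d c; b0 = beta0 l r d g c;
          a = alpha1 l r d c; b = beta1 l r d g c; Ainv = the (mat_inverse (Amat l r d c))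
      in (a0 * b 1 - a 1 * b0)
         - (\<Sum>j\<in>{2..l}. \<Sum>s\<in>{2..l}. Ainv $$ (s - 2, j - 2) * (a0 * b s - a s * b0)
                 * (alpha2 l r d c j 1 - a 1 * a j / a0)))"

end

theory Submission
  imports Defs "HOL-Analysis.FPS_Convergence" "Jordan_Normal_Form.Determinant"
begin


locale P318 =
  fixes l :: nat and r :: "nat \<Rightarrow> nat" and d :: "nat \<Rightarrow> int"
  assumes l2: "l \<ge> 2" and rpos: "\<forall>k\<le>l. r k \<ge> 1" and dsum: "(\<Sum>k\<le>l. d k) = 0"
begin

definition "nn = real (rV l r)"
definition "FF = (fact (rV l r) :: real)"
definition "KK = piR l r"
definition "CC = nn + 2"
definition "JJ = {2..l}"

lemma rV_ge: "rV l r \<ge> l + 1"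
proof -
  have "(\<Sum>k\<le>l. (1::nat)) \<le> (\<Sum>k\<le>l. r k)" using rpos by (intro sum_mono) auto
  thus ?thesis by (simp add: rV_def)
qed

lemma nn_ge: "nn \<ge> 3" using rV_ge l2 unfolding nn_def by linarith
lemma FF_pos: "FF > 0" by (simp add: FF_def)
lemma KK_pos: "KK > 0" unfolding KK_def piR_def by (intro prod_pos) auto
lemma dV0: "dV l d = 0" using dsum by (simp add: dV_def)
lemma r_pos: "k \<le> l \<Longrightarrow> real (r k) > 0" using rpos by fastforce

lemma fact1: "(fact (rV l r + 1) :: real) = (nn + 1) * FF"
  by (simp add: FF_def nn_def algebra_simps)
lemma fact2: "(fact (rV l r + 2) :: real) = (nn + 2) * (nn + 1) * FF"
proof -
  have "rV l r + 2 = Suc (Suc (rV l r))" by simp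
  then show ?thesis by (simp only: fact_Suc) (simp add: FF_def nn_def algebra_simps)
qed
lemma fact0: "(fact (rV l r - 1) :: real) = FF / nn"
proof -
  have "rV l r = Suc (rV l r - 1)" using rV_ge by simp
  then have "(fact (rV l r) :: real) = real (rV l r) * fact (rV l r - 1)"
    by (metis fact_Suc of_nat_Suc)
  then show ?thesis using nn_ge by (simp add: FF_def nn_def field_simps)
qed

lemma rV_split: "nn = real (r 0) + real (r 1) + (\<Sum>j\<in>JJ. real (r j))"
proof -
  have "{..l} = {0,1} \<union> {2..l}" using l2 by auto
  then have "(\<Sum>k\<le>l. real (r k)) = (\<Sum>k\<in>{0,1}. real (r k)) + (\<Sum>k\<in>{2..l}. real (r k))"
    by (simp add: sum.union_disjoint)
  then show ?thesis by (simp add: nn_def rV_def JJ_def)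
qed

lemma rVn: "real (rV l r) = nn" by (simp add: nn_def)
lemma nz1: "nn + 1 \<noteq> 0" "nn + 2 \<noteq> 0" "nn \<noteq> 0" "FF \<noteq> 0" "KK \<noteq> 0" "1 + nn \<noteq> 0" "2 + nn \<noteq> 0"
  using nn_ge FF_pos KK_pos by auto

definition "ww c j = CC * c - 2 * mu r d j"
definition "KP = KK / ((nn + 2) * (nn + 1) * FF)"
definition "kap c = CC / (4 * (nn + 1) * nn * c)"
definition "BBf c i j = (ww c i + ww c j) / 2 - kap c * (ww c i + nn * c) * (ww c j + nn * c)"
definition "Aent c i j = alpha2 l r d c i j - alpha1 l r d c i * alpha1 l r d c j / alpha0 l r d c"

lemma alpha0_eq: "alpha0 l r d c = KK / FF * (c * nn)"
  by (simp add: alpha0_def dV0 KK_def FF_def nn_def)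
lemma alpha1_eq: "alpha1 l r d c j = KK / ((nn + 1) * FF) * real (r j) * ((ww c j + nn * c) / 2)"
proof -
  have "c * (real (rV l r) + 1) - dV l d - mu r d j = (ww c j + nn * c) / 2"
    by (simp add: ww_def CC_def dV0 rVn field_simps)
  note e = this
  show ?thesis unfolding alpha1_def fact1 KK_def e ..
qed
lemma alpha2_eq: "alpha2 l r d c i j = KP * ((if i = j then real (r i) * ww c i else 0)
     + real (r i) * real (r j) * ((ww c i + ww c j) / 2))"
proof -
  have e1: "real (r j) * (real (r j) + 1) * (c * (real (rV l r) + 2) - dV l d - 2 * mu r d j)
    = real (r j) * ww c j + real (r j) * real (r j) * ((ww c j + ww c j) / 2)"
    by (simp add: ww_def CC_def dV0 rVn field_simps)
  have e2: "(c * (real (rV l r) + 2) - dV l d - mu r d i - mu r d j)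
    = ((ww c i + ww c j) / 2)"
    by (simp add: ww_def CC_def dV0 rVn field_simps)
  show ?thesis 
  proof (cases "i = j")
    case True then show ?thesis unfolding alpha2_def fact2 KP_def KK_def using e1 by (simp add: mult.assoc)
  next
    case False then show ?thesis unfolding alpha2_def fact2 KP_def KK_def 
      by (simp only: e2 if_False) simp
  qed
qed

lemma gen_frac: fixes K F n c N1 N2 ri rj Xi Xj :: real
  assumes "K \<noteq> 0" "F \<noteq> 0" "n \<noteq> 0" "c \<noteq> 0" "N1 \<noteq> 0" "N2 \<noteq> 0"
  shows "(K / (N1 * F) * ri * (Xi / 2)) * (K / (N1 * F) * rj * (Xj / 2)) / (K / F * (c * n))
     = K / (N2 * N1 * F) * (ri * rj * (N2 / (4 * N1 * n * c) * Xi * Xj))"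
  using assms by (simp add: field_simps power2_eq_square)

lemma Aent_form:
  assumes "c > 0"
  shows "Aent c i j = KP * ((if i = j then real (r i) * ww c i else 0) + real (r i) * real (r j) * BBf c i j)"
proof -
  have "alpha1 l r d c i * alpha1 l r d c j / alpha0 l r d c
      = KP * (real (r i) * real (r j) * (kap c * (ww c i + nn * c) * (ww c j + nn * c)))"
    unfolding alpha1_eq alpha0_eq KP_def kap_def CC_def
    using nz1 assms by (intro gen_frac) auto
  then show ?thesis unfolding Aent_def alpha2_eq BBf_def by (simp add: algebra_simps)
qed


definition "RJ = (\<Sum>j\<in>JJ. real (r j))"
definition "SJ c = (\<Sum>j\<in>JJ. real (r j) / ww c j)"
definition "PJ c = (\<Sum>j\<in>JJ. real (r j) * ww c j)"
definition "m11 c = - kap c * nn^2 * c^2"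
definition "m12 c = 1/2 - kap c * nn * c"
definition "m22 c = - kap c"
definition "cc11 c = 1 + m11 c * SJ c + m12 c * RJ"
definition "cc12 c = m11 c * RJ + m12 c * PJ c"
definition "cc21 c = m12 c * SJ c + m22 c * RJ"
definition "cc22 c = 1 + m12 c * RJ + m22 c * PJ c"
definition "ee1 c = m11 c * real (r 1) + m12 c * real (r 1) * ww c 1"
definition "ee2 c = m12 c * real (r 1) + m22 c * real (r 1) * ww c 1"
definition "Dl c = cc11 c * cc22 c - cc12 c * cc21 c"
definition "aa c = (ee1 c * cc22 c - cc12 c * ee2 c) / Dl c"
definition "bb c = (cc11 c * ee2 c - cc21 c * ee1 c) / Dl c"
definition "ys c j = bb c + aa c / ww c j"
definition "good c \<longleftrightarrow> c > 0 \<and> (\<forall>j\<le>l. ww c j > 0) \<and> Dl c \<noteq> 0"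

lemma BBf_dec: "BBf c i j = (m12 c * ww c i + m11 c) + (m12 c + m22 c * ww c i) * ww c j"
  unfolding BBf_def m11_def m12_def m22_def by (simp add: algebra_simps power2_eq_square)

lemma JJ_le: "j \<in> JJ \<Longrightarrow> j \<le> l" "j \<in> JJ \<Longrightarrow> j \<noteq> 1" "j \<in> JJ \<Longrightarrow> j \<noteq> 0" "finite JJ"
  by (auto simp: JJ_def)

lemma sum_row:
  assumes "c > 0" "i \<in> JJ"
  shows "(\<Sum>j\<in>JJ. Aent c i j * u j) = KP * (real (r i) * ww c i * u i + real (r i) *
     ((m12 c * ww c i + m11 c) * (\<Sum>j\<in>JJ. real (r j) * u j)
      + (m12 c + m22 c * ww c i) * (\<Sum>j\<in>JJ. real (r j) * ww c j * u j)))"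
proof -
  have "(\<Sum>j\<in>JJ. Aent c i j * u j) = (\<Sum>j\<in>JJ. KP * ((if i = j then real (r i) * ww c i * u j else 0)
      + real (r i) * ((m12 c * ww c i + m11 c) * (real (r j) * u j)
      + (m12 c + m22 c * ww c i) * (real (r j) * ww c j * u j))))"
    by (intro sum.cong refl) (simp add: Aent_form assms BBf_dec algebra_simps)
  also have "\<dots> = KP * ((\<Sum>j\<in>JJ. (if i = j then real (r i) * ww c i * u j else 0))
      + real (r i) * ((m12 c * ww c i + m11 c) * (\<Sum>j\<in>JJ. real (r j) * u j)
      + (m12 c + m22 c * ww c i) * (\<Sum>j\<in>JJ. real (r j) * ww c j * u j)))"
    by (simp add: sum.distrib sum_distrib_left distrib_left)
  also have "(\<Sum>j\<in>JJ. (if i = j then real (r i) * ww c i * u j else 0)) = real (r i) * ww c i * u i"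
    using assms(2) JJ_le(4) by (simp add: sum.delta)
  finally show ?thesis .
qed

lemma cramer: fixes a b c' dd e f D :: real
  assumes "D = a * dd - b * c'" "D \<noteq> 0"
  shows "(e * dd - b * f) / D * a + (a * f - c' * e) / D * b = e"
    "(e * dd - b * f) / D * c' + (a * f - c' * e) / D * dd = f"
proof -
  have "(e * dd - b * f) / D * a + (a * f - c' * e) / D * b = e * (a * dd - b * c') / D"
    using assms(2) by (simp add: field_simps; simp add: algebra_simps)
  then show "(e * dd - b * f) / D * a + (a * f - c' * e) / D * b = e" using assms by simp
  have "(e * dd - b * f) / D * c' + (a * f - c' * e) / D * dd = f * (a * dd - b * c') / D"
    using assms(2) by (simp add: field_simps; simp add: algebra_simps)
  then show "(e * dd - b * f) / D * c' + (a * f - c' * e) / D * dd = f" using assms by simp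
qed

lemma sys_sol: assumes "Dl c \<noteq> 0"
  shows "aa c * cc11 c + bb c * cc12 c = ee1 c" "aa c * cc21 c + bb c * cc22 c = ee2 c"
  unfolding aa_def bb_def using cramer[OF Dl_def assms] by auto

lemma solve_row:
  assumes "good c" "i \<in> JJ"
  shows "(\<Sum>j\<in>JJ. Aent c i j * ys c j) = Aent c i 1"
proof -
  have c0: "c > 0" and wpos: "\<And>j. j \<le> l \<Longrightarrow> ww c j > 0" and D: "Dl c \<noteq> 0"
    using assms(1) by (auto simp: good_def)
  have Y0: "(\<Sum>j\<in>JJ. real (r j) * ys c j) = bb c * RJ + aa c * SJ c"
    unfolding ys_def RJ_def SJ_def by (simp add: algebra_simps sum.distrib sum_distrib_left)
  have Y1: "(\<Sum>j\<in>JJ. real (r j) * ww c j * ys c j) = bb c * PJ c + aa c * RJ"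
  proof -
    have "(\<Sum>j\<in>JJ. real (r j) * ww c j * ys c j) = (\<Sum>j\<in>JJ. bb c * (real (r j) * ww c j) + aa c * real (r j))"
      using wpos JJ_le by (intro sum.cong refl) (auto simp: ys_def field_simps dest: order.strict_implies_not_eq[symmetric])
    then show ?thesis unfolding PJ_def RJ_def by (simp add: sum.distrib sum_distrib_left)
  qed
  have wi: "ww c i \<noteq> 0" using wpos JJ_le assms(2) by (metis less_irrefl)
  have i1: "i \<noteq> 1" using assms(2) JJ_le by auto
  have rhs: "Aent c i 1 = KP * (real (r i) * real (r 1) * ((m12 c * ww c i + m11 c) + (m12 c + m22 c * ww c i) * ww c 1))"
    using i1 c0 by (simp add: Aent_form BBf_dec)
  have e1: "aa c * cc11 c + bb c * cc12 c = ee1 c" and e2: "aa c * cc21 c + bb c * cc22 c = ee2 c"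
    using sys_sol D by auto
  have key: "ww c i * ys c i + ((m12 c * ww c i + m11 c) * (bb c * RJ + aa c * SJ c)
      + (m12 c + m22 c * ww c i) * (bb c * PJ c + aa c * RJ))
      = real (r 1) * ((m12 c * ww c i + m11 c) + (m12 c + m22 c * ww c i) * ww c 1)"
  proof -
    have h1: "ww c i * ys c i = ww c i * bb c + aa c" unfolding ys_def using wi by (simp add: field_simps)
    have h2: "aa c + m11 c * (bb c * RJ + aa c * SJ c) + m12 c * (bb c * PJ c + aa c * RJ) = ee1 c"
      using e1 unfolding cc11_def cc12_def by (simp add: algebra_simps)
    have h3: "bb c + m12 c * (bb c * RJ + aa c * SJ c) + m22 c * (bb c * PJ c + aa c * RJ) = ee2 c"
      using e2 unfolding cc21_def cc22_def by (simp add: algebra_simps)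
    have "ww c i * ys c i + ((m12 c * ww c i + m11 c) * (bb c * RJ + aa c * SJ c)
      + (m12 c + m22 c * ww c i) * (bb c * PJ c + aa c * RJ))
      = ww c i * (bb c + m12 c * (bb c * RJ + aa c * SJ c) + m22 c * (bb c * PJ c + aa c * RJ))
        + (aa c + m11 c * (bb c * RJ + aa c * SJ c) + m12 c * (bb c * PJ c + aa c * RJ))"
      unfolding h1 by (simp add: algebra_simps)
    also have "\<dots> = ww c i * ee2 c + ee1 c" unfolding h2 h3 ..
    finally show ?thesis unfolding ee1_def ee2_def by (simp add: algebra_simps)
  qed
  have "KP * (real (r i) * ww c i * ys c i + real (r i) *
     ((m12 c * ww c i + m11 c) * (bb c * RJ + aa c * SJ c)
      + (m12 c + m22 c * ww c i) * (bb c * PJ c + aa c * RJ)))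
    = KP * real (r i) * (ww c i * ys c i + ((m12 c * ww c i + m11 c) * (bb c * RJ + aa c * SJ c)
      + (m12 c + m22 c * ww c i) * (bb c * PJ c + aa c * RJ)))" by (simp add: algebra_simps)
  also have "\<dots> = KP * real (r i) * (real (r 1) * ((m12 c * ww c i + m11 c) + (m12 c + m22 c * ww c i) * ww c 1))"
    unfolding key ..
  finally show ?thesis unfolding sum_row[OF c0 assms(2)] Y0 Y1 rhs by (simp add: algebra_simps)
qed


lemma KP_nz: "KP \<noteq> 0" unfolding KP_def using nz1 FF_pos KK_pos by simp

lemma kernel:
  assumes "good c" and h: "\<And>i. i \<in> JJ \<Longrightarrow> (\<Sum>j\<in>JJ. Aent c i j * u j) = 0" and "i \<in> JJ"
  shows "u i = 0"
proof -
  have c0: "c > 0" and wpos: "\<And>j. j \<le> l \<Longrightarrow> ww c j > 0" and D: "Dl c \<noteq> 0"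
    using assms(1) by (auto simp: good_def)
  define Y0 where "Y0 = (\<Sum>j\<in>JJ. real (r j) * u j)"
  define Y1 where "Y1 = (\<Sum>j\<in>JJ. real (r j) * ww c j * u j)"
  define A0 where "A0 = - (m12 c * Y0 + m22 c * Y1)"
  define B0 where "B0 = - (m11 c * Y0 + m12 c * Y1)"
  have ui: "u i = A0 + B0 / ww c i" if "i \<in> JJ" for i
  proof -
    have wi: "ww c i \<noteq> 0" using wpos JJ_le that by (metis less_irrefl)
    have ri: "real (r i) \<noteq> 0" using r_pos JJ_le that by (metis less_irrefl)
    from h[OF that] have "KP * (real (r i) * (ww c i * u i +
     ((m12 c * ww c i + m11 c) * Y0 + (m12 c + m22 c * ww c i) * Y1))) = 0"
      unfolding sum_row[OF c0 that] Y0_def Y1_def by (simp add: algebra_simps)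
    then have "ww c i * u i + ((m12 c * ww c i + m11 c) * Y0 + (m12 c + m22 c * ww c i) * Y1) = 0"
      using KP_nz ri by simp
    then have "ww c i * u i = ww c i * A0 + B0" unfolding A0_def B0_def by (simp add: algebra_simps)
    then show ?thesis using wi by (simp add: field_simps)
  qed
  have Y0': "Y0 = A0 * RJ + B0 * SJ c"
  proof -
    have "Y0 = (\<Sum>j\<in>JJ. A0 * real (r j) + B0 * (real (r j) / ww c j))"
      unfolding Y0_def by (intro sum.cong refl) (simp add: ui algebra_simps)
    then show ?thesis unfolding RJ_def SJ_def by (simp add: sum.distrib sum_distrib_left)
  qed
  have Y1': "Y1 = A0 * PJ c + B0 * RJ"
  proof -
    have "Y1 = (\<Sum>j\<in>JJ. A0 * (real (r j) * ww c j) + B0 * real (r j))"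
      unfolding Y1_def using wpos JJ_le
      by (intro sum.cong refl) (auto simp add: ui field_simps dest: order.strict_implies_not_eq[symmetric])
    then show ?thesis unfolding RJ_def PJ_def by (simp add: sum.distrib sum_distrib_left)
  qed
  have E1: "B0 * cc11 c + A0 * cc12 c = 0"
    using B0_def[unfolded Y0' Y1'] unfolding cc11_def cc12_def by (simp add: algebra_simps)
  have E2: "B0 * cc21 c + A0 * cc22 c = 0"
    using A0_def[unfolded Y0' Y1'] unfolding cc21_def cc22_def by (simp add: algebra_simps)
  have "B0 * Dl c = cc22 c * (B0 * cc11 c + A0 * cc12 c) - cc12 c * (B0 * cc21 c + A0 * cc22 c)"
    unfolding Dl_def by (simp add: algebra_simps)
  then have "B0 = 0" using E1 E2 D by simp
  have "A0 * Dl c = cc11 c * (B0 * cc21 c + A0 * cc22 c) - cc21 c * (B0 * cc11 c + A0 * cc12 c)"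
    unfolding Dl_def by (simp add: algebra_simps)
  then have "A0 = 0" using E1 E2 D by simp
  show ?thesis using ui[OF assms(3)] \<open>A0 = 0\<close> \<open>B0 = 0\<close> by simp
qed

lemma reidx: "(\<Sum>j<l - 1. f (j + 2)) = (\<Sum>j\<in>JJ. (f j :: real))"
proof -
  have "(\<Sum>j\<in>JJ. f j) = (\<Sum>j\<in>{0 + 2..<(l - 1) + 2}. f j)"
    unfolding JJ_def using l2 by (intro sum.cong) auto
  also have "\<dots> = (\<Sum>j\<in>{0..<l - 1}. f (j + 2))" by (rule sum.shift_bounds_nat_ivl)
  finally show ?thesis by (simp add: lessThan_atLeast0)
qed

lemma mvec: assumes "A \<in> carrier_mat n m" "v \<in> carrier_vec m" "k < n"
  shows "(A *\<^sub>v v) $ k = (\<Sum>j<m. A $$ (k, j) * (v $ j :: real))"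
  using assms by (auto simp: scalar_prod_def lessThan_atLeast0 mult.commute intro!: sum.cong)

lemma Amat_idx: "i < l - 1 \<Longrightarrow> j < l - 1 \<Longrightarrow> Amat l r d c $$ (i, j) = Aent c (i + 2) (j + 2)"
  unfolding Amat_def Aent_def by simp

lemma Amat_carrier: "Amat l r d c \<in> carrier_mat (l - 1) (l - 1)"
  unfolding Amat_def by simp

lemma det_nz: assumes "good c" shows "det (Amat l r d c) \<noteq> 0"
proof
  assume "det (Amat l r d c) = 0"
  then obtain v where v: "v \<in> carrier_vec (l - 1)" "v \<noteq> 0\<^sub>v (l - 1)" "Amat l r d c *\<^sub>v v = 0\<^sub>v (l - 1)"
    using det_0_iff_vec_prod_zero_field[OF Amat_carrier] by blast
  define u where "u j = v $ (j - 2)" for j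
  have "(\<Sum>j\<in>JJ. Aent c i j * u j) = 0" if "i \<in> JJ" for i
  proof -
    have i: "i - 2 < l - 1" using that l2 by (auto simp: JJ_def)
    have "(Amat l r d c *\<^sub>v v) $ (i - 2) = 0" using v(3) i by simp
    then have "(\<Sum>j<l - 1. Amat l r d c $$ (i - 2, j) * v $ j) = 0"
      using i v(1) by (simp add: mvec[OF Amat_carrier])
    then have "(\<Sum>j<l - 1. Aent c i (j + 2) * u (j + 2)) = 0"
      using i that by (simp add: Amat_idx u_def JJ_def Suc_diff_Suc numeral_2_eq_2)
    then show ?thesis using reidx[of "\<lambda>j. Aent c i j * u j"] by simp
  qed
  then have "\<forall>j. j \<in> JJ \<longrightarrow> u j = 0" using kernel[OF assms] by blast
  then have vz: "v $ k = 0" if "k < l - 1" for k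
    using that l2 by (auto simp: u_def JJ_def dest!: spec[of _ "k + 2"])
  have "v = 0\<^sub>v (l - 1)"
    using v(1) vz by (intro eq_vecI) auto
  with v(2) show False by simp
qed




lemma inv_apply:
  assumes "good c" "s \<in> JJ"
  shows "(\<Sum>j\<in>JJ. the (mat_inverse (Amat l r d c)) $$ (s - 2, j - 2) * Aent c j 1) = ys c s"
proof -
  let ?A = "Amat l r d c"
  have U: "?A \<in> Units (ring_mat TYPE(real) (l - 1) ())"
    using det_non_zero_imp_unit[OF Amat_carrier det_nz[OF assms(1)]] .
  have "mat_inverse ?A \<noteq> None"
  proof
    assume "mat_inverse ?A = None"
    then have "?A \<notin> Units (ring_mat TYPE(real) (l - 1) ())" by (rule mat_inverse(1)[OF Amat_carrier])
    with U show False by simp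
  qed
  then obtain B where B: "mat_inverse ?A = Some B" by blast
  from mat_inverse(2)[OF Amat_carrier B] have BA: "B * ?A = 1\<^sub>m (l - 1)" and Bc: "B \<in> carrier_mat (l - 1) (l - 1)"
    by auto
  define yv where "yv = Matrix.vec (l - 1) (\<lambda>i. ys c (i + 2))"
  define qv where "qv = Matrix.vec (l - 1) (\<lambda>i. Aent c (i + 2) 1)"
  have yvc: "yv \<in> carrier_vec (l - 1)" unfolding yv_def by simp
  have Ay: "?A *\<^sub>v yv = qv"
  proof (rule eq_vecI)
    fix i assume "i < dim_vec qv"
    then have i: "i < l - 1" by (simp add: qv_def)
    then have iJ: "i + 2 \<in> JJ" by (auto simp: JJ_def)
    have "(?A *\<^sub>v yv) $ i = (\<Sum>j<l - 1. Aent c (i + 2) (j + 2) * ys c (j + 2))"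
      unfolding mvec[OF Amat_carrier yvc i] using i by (simp add: Amat_idx yv_def)
    also have "\<dots> = (\<Sum>j\<in>JJ. Aent c (i + 2) j * ys c j)" using reidx[of "\<lambda>j. Aent c (i + 2) j * ys c j"] by simp
    also have "\<dots> = Aent c (i + 2) 1" by (rule solve_row[OF assms(1) iJ])
    finally show "(?A *\<^sub>v yv) $ i = qv $ i" using i by (simp add: qv_def)
  qed (simp add: qv_def Amat_def)
  have "B *\<^sub>v qv = (B * ?A) *\<^sub>v yv"
    unfolding Ay[symmetric] using assoc_mult_mat_vec[OF Bc Amat_carrier[of c] yvc] by simp
  also have "\<dots> = yv" using BA yvc by simp
  finally have "B *\<^sub>v qv = yv" .
  then have "(B *\<^sub>v qv) $ (s - 2) = ys c s" using assms(2) by (auto simp: yv_def JJ_def Suc_diff_Suc numeral_2_eq_2)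
  moreover have "(B *\<^sub>v qv) $ (s - 2) = (\<Sum>j<l - 1. B $$ (s - 2, j) * Aent c (j + 2) 1)"
  proof -
    have sl: "s - 2 < l - 1" using assms(2) l2 by (auto simp: JJ_def)
    have qvc: "qv \<in> carrier_vec (l - 1)" unfolding qv_def by simp
    show ?thesis unfolding mvec[OF Bc qvc sl] by (simp add: qv_def)
  qed
  moreover have "(\<Sum>j<l - 1. B $$ (s - 2, j) * Aent c (j + 2) 1) = (\<Sum>j\<in>JJ. B $$ (s - 2, j - 2) * Aent c j 1)"
    using reidx[of "\<lambda>j. B $$ (s - 2, j - 2) * Aent c j 1"] by simp
  ultimately show ?thesis using B by simp
qed



lemma beta0_eq: "beta0 l r d g c = KK * nn / FF * ((nn - 1) * nn * c + 2 * (1 - real_of_int g))"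
  unfolding beta0_def fact0 dV0 rVn KK_def[symmetric] using nz1 by simp
lemma beta1_eq: "beta1 l r d g c j = KK * real (r j) / FF * (nn * (nn - 1) * c + 2 * (1 - real_of_int g) - nn * mu r d j)"
  unfolding beta1_def dV0 rVn KK_def[symmetric] FF_def[symmetric] by simp

lemma gen_ab0: fixes K F n c E mu rs N1 :: real
  assumes "F \<noteq> 0" "N1 \<noteq> 0" "n \<noteq> 0" "N1 = n + 1"
  shows "(K / F * (c * n)) * (K * rs / F * (n * (n - 1) * c + E - n * mu))
    - (K / (N1 * F) * rs * (((n + 2) * c - 2 * mu + n * c) / 2)) * (K * n / F * ((n - 1) * n * c + E))
    = K * (E - 2 * n * c) / F * K * n / (N1 * F) * (rs * mu)"
proof -
  have "(K / F * (c * n)) * (K * rs / F * (n * (n - 1) * c + E - n * mu))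
    - (K / (N1 * F) * rs * (((n + 2) * c - 2 * mu + n * c) / 2)) * (K * n / F * ((n - 1) * n * c + E))
    = K * K * rs * n / (N1 * F * F) * (c * N1 * (n * (n - 1) * c + E - n * mu) - ((n + 1) * c - mu) * ((n - 1) * n * c + E))"
    using assms(1,2) by (simp add: field_simps; simp add: algebra_simps)
  also have "c * N1 * (n * (n - 1) * c + E - n * mu) - ((n + 1) * c - mu) * ((n - 1) * n * c + E) = mu * (E - 2 * n * c)"
    unfolding assms(4) by (simp add: algebra_simps)
  finally show ?thesis using assms(1,2) by (simp add: field_simps)
qed

lemma gen_ab: fixes K F n c E mu rs :: real
  assumes "F \<noteq> 0" "n + 1 \<noteq> 0" "n \<noteq> 0"
  shows "(K / F * (c * n)) * (K * rs / F * (n * (n - 1) * c + E - n * mu))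
    - (K / ((n + 1) * F) * rs * (((n + 2) * c - 2 * mu + n * c) / 2)) * (K * n / F * ((n - 1) * n * c + E))
    = K * (E - 2 * n * c) / F * K * n / ((n + 1) * F) * (rs * mu)"
  using gen_ab0[OF assms(1,2,3) refl] .

definition "gam g c = KK * (2 * (1 - real_of_int g) - 2 * nn * c) / FF * KK * nn / ((nn + 1) * FF)"

lemma ab_eq: assumes "s \<le> l"
  shows "alpha0 l r d c * beta1 l r d g c s - alpha1 l r d c s * beta0 l r d g c = gam g c * real_of_int (d s)"
proof -
  have "real_of_int (d s) = real (r s) * mu r d s" using r_pos[OF assms] by (simp add: mu_def)
  then show ?thesis unfolding alpha0_eq beta1_eq alpha1_eq beta0_eq gam_def ww_def CC_def
    using gen_ab[OF nz1(4) nz1(1) nz1(3)] by simp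
qed

lemma Fring_eq: assumes "good c"
  shows "Fring l r d g c = gam g c * (real_of_int (d 1) - (\<Sum>s\<in>JJ. real_of_int (d s) * ys c s))"
proof -
  let ?Ai = "the (mat_inverse (Amat l r d c))"
  let ?X = "\<lambda>s. alpha0 l r d c * beta1 l r d g c s - alpha1 l r d c s * beta0 l r d g c"
  have "Fring l r d g c = ?X 1 - (\<Sum>j\<in>JJ. \<Sum>s\<in>JJ. ?Ai $$ (s - 2, j - 2) * ?X s * Aent c j 1)"
    unfolding Fring_def Let_def Aent_def JJ_def by (simp add: mult.commute)
  also have "(\<Sum>j\<in>JJ. \<Sum>s\<in>JJ. ?Ai $$ (s - 2, j - 2) * ?X s * Aent c j 1)
      = (\<Sum>s\<in>JJ. ?X s * (\<Sum>j\<in>JJ. ?Ai $$ (s - 2, j - 2) * Aent c j 1))"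
    by (subst sum.swap) (simp add: sum_distrib_left algebra_simps)
  also have "\<dots> = (\<Sum>s\<in>JJ. gam g c * (real_of_int (d s) * ys c s))"
  proof (intro sum.cong refl)
    fix s assume s: "s \<in> JJ"
    show "?X s * (\<Sum>j\<in>JJ. ?Ai $$ (s - 2, j - 2) * Aent c j 1) = gam g c * (real_of_int (d s) * ys c s)"
      unfolding inv_apply[OF assms s] ab_eq[OF JJ_le(1)[OF s]] by simp
  qed
  finally show ?thesis using l2 by (simp add: ab_eq sum_distrib_left right_diff_distrib)
qed

end

lemma poly_id:
  fixes c n r0 r1 u0 u1 S :: real
  shows "(2 * (r1 * u1) * (((4 * (n + 1)) - (n + 2) * n * c * S + n * (n - r0 - r1)) * ((4 * (n + 1)) * n * c + n * n * c * (n - r0 - r1) - (n + 2) * (n + 2) * c * (n - r0 - r1) - 2 * (n + 2) * ((r0 * u0) + (r1 * u1))) - (2 * n * ((r0 * u0) + (r1 * u1))) * (n * n * c * S - (n + 2) * (n - r0 - r1))) + 2 * ((r0 * u0) + (r1 * u1)) * (((4 * (n + 1)) - (n + 2) * n * c * S + n * (n - r0 - r1)) * (r1 * c * (n * n - (n + 2) * (n + 2)) + 2 * (n + 2) * (r1 * u1)) - (n * n * c * S - (n + 2) * (n - r0 - r1)) * (- 2 * n * (r1 * u1))) - ((n + 2) * c * S - (n - r0 - r1)) * ((- 2 * n * (r1 * u1)) * ((4 * (n + 1)) * n * c + n * n * c * (n - r0 - r1) - (n + 2) * (n + 2) * c * (n - r0 - r1) - 2 * (n + 2) * ((r0 * u0)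 + (r1 * u1))) - (2 * n * ((r0 * u0) + (r1 * u1))) * (r1 * c * (n * n - (n + 2) * (n + 2)) + 2 * (n + 2) * (r1 * u1)))) * ((r0 * ((n + 2) * c - 2 * u0) + r1 * ((n + 2) * c - 2 * u1)) * ((2 + n) * ((n + 2) * c - 2 * u0) * ((n + 2) * c - 2 * u1) - n * c * (S * ((n + 2) * c - 2 * u0) * ((n + 2) * c - 2 * u1) + r0 * ((n + 2) * c - 2 * u1) + r1 * ((n + 2) * c - 2 * u0))) + 4 * n * c * (u0 - u1)^2 * r0 * r1) = 4 * (-(2 * n + 2) * c * (u0 - u1) * r0 * r1 * ((n + 2) * c - 2 * u0) * ((n + 2) * c - 2 * u1)) * (((4 * (n + 1)) - (n + 2) * n * c * S + n * (n - r0 - r1)) * ((4 * (n + 1)) * n * c + n * n * c * (n - r0 - r1) - (n + 2) * (n + 2) * c * (n - r0 - r1) - 2 * (n + 2) * ((r0 * u0) + (r1 * u1))) - (2 * n * ((r0 * u0) + (r1 * u1))) * (n * n * c * S - (n + 2) * (n - r0 - r1)))"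
  by Groebner_Basis.algebra

lemma poly_id2:
  fixes c n r0 r1 u0 u1 S C R d0 d1 w0 w1 Z A11 A12 A21 A22 B1 B2 :: real
  assumes "C = n + 2" "R = n - r0 - r1" "d0 = r0 * u0" "d1 = r1 * u1"
    "w0 = C * c - 2 * u0" "w1 = C * c - 2 * u1" "Z = 4 * (n + 1)"
    "A11 = Z - C * n * c * S + n * R" "A12 = 2 * n * (d0 + d1)"
    "A21 = n * n * c * S - C * R" "A22 = Z * n * c + n * n * c * R - C * C * c * R - 2 * C * (d0 + d1)"
    "B1 = - 2 * n * d1" "B2 = r1 * c * (n * n - C * C) + 2 * C * d1"
  shows "(2 * d1 * (A11 * A22 - A12 * A21) + 2 * (d0 + d1) * (A11 * B2 - A21 * B1) - (C * c * S - R) * (B1 * A22 - A12 * B2)) * ((r0 * w0 + r1 * w1) * ((2 + n) * w0 * w1 - n * c * (S * w0 * w1 + r0 * w1 + r1 * w0)) + 4 * n * c * (u0 - u1)^2 * r0 * r1) = 4 * (-(2 * n + 2) * c * (u0 - u1) * r0 * r1 * w0 * w1) * (A11 * A22 - A12 * A21)"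
  unfolding assms(8-13) unfolding assms(1-7) by (rule poly_id)


context P318 begin

definition "ZZ = 4 * (nn + 1)"
definition "u0 = mu r d 0"
definition "u1 = mu r d 1"
definition "rr0 = real (r 0)"
definition "rr1 = real (r 1)"
definition "dd0 = real_of_int (d 0)"
definition "dd1 = real_of_int (d 1)"

lemma dd_eq: "dd0 = rr0 * u0" "dd1 = rr1 * u1"
  using r_pos[of 0] r_pos[of 1] l2 by (auto simp: dd0_def dd1_def rr0_def rr1_def u0_def u1_def mu_def)

lemma ZZ_eq: "ZZ = 2 * CC + 2 * nn" "ZZ \<noteq> 0" using nn_ge by (auto simp: ZZ_def CC_def)
lemma CC_nz: "CC \<noteq> 0" using nn_ge by (simp add: CC_def)

lemma m_forms: assumes "c \<noteq> 0"
  shows "m11 c = - CC * nn * c / ZZ" "m12 c = nn / ZZ" "m22 c = - CC / (ZZ * nn * c)"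
proof -
  have k: "kap c = CC / (ZZ * nn * c)" unfolding kap_def ZZ_def by (simp add: mult.assoc)
  show "m11 c = - CC * nn * c / ZZ" unfolding m11_def k using assms nz1 ZZ_eq(2) by (simp add: field_simps power2_eq_square)
  have "1 / 2 - CC / (ZZ * nn * c) * nn * c = (ZZ - 2 * CC) / (2 * ZZ)" using assms nz1 ZZ_eq(2) by (simp add: field_simps)
  also have "ZZ - 2 * CC = 2 * nn" using ZZ_eq(1) by simp
  finally show "m12 c = nn / ZZ" unfolding m12_def k using ZZ_eq(2) by simp
  show "m22 c = - CC / (ZZ * nn * c)" unfolding m22_def k by simp
qed

lemma RJ_eq: "RJ = nn - rr0 - rr1" using rV_split by (simp add: RJ_def rr0_def rr1_def)

lemma dsplit: "(\<Sum>j\<in>JJ. real_of_int (d j)) = - (dd0 + dd1)"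
proof -
  have "{..l} = {0,1} \<union> JJ" using l2 by (auto simp: JJ_def)
  then have "(\<Sum>k\<le>l. real_of_int (d k)) = (\<Sum>k\<in>{0,1}. real_of_int (d k)) + (\<Sum>k\<in>JJ. real_of_int (d k))"
    by (simp add: sum.union_disjoint JJ_def)
  moreover have "(\<Sum>k\<le>l. real_of_int (d k)) = 0" using dsum by (metis of_int_0 of_int_sum)
  ultimately show ?thesis by (simp add: dd0_def dd1_def)
qed

lemma wnz: "good c \<Longrightarrow> j \<le> l \<Longrightarrow> ww c j \<noteq> 0" by (auto simp: good_def dest!: spec[of _ j])

lemma PJ_eq: "PJ c = CC * c * RJ + 2 * (dd0 + dd1)"
proof -
  have "PJ c = (\<Sum>j\<in>JJ. CC * c * real (r j) - 2 * real_of_int (d j))"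
    unfolding PJ_def ww_def using r_pos JJ_le by (intro sum.cong refl) (auto simp: mu_def field_simps)
  also have "\<dots> = CC * c * (\<Sum>j\<in>JJ. real (r j)) - 2 * (\<Sum>j\<in>JJ. real_of_int (d j))"
    by (simp add: sum_subtractf sum_distrib_left)
  finally show ?thesis using dsplit by (simp add: RJ_def)
qed

lemma SdJ: assumes "good c"
  shows "(\<Sum>j\<in>JJ. real_of_int (d j) / ww c j) = (CC * c * SJ c - RJ) / 2"
proof -
  have "(\<Sum>j\<in>JJ. real_of_int (d j) / ww c j) = (\<Sum>j\<in>JJ. (CC * c * (real (r j) / ww c j) - real (r j)) / 2)"
  proof (intro sum.cong refl)
    fix j assume j: "j \<in> JJ"
    have w: "ww c j \<noteq> 0" using wnz[OF assms JJ_le(1)[OF j]] .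
    have rj: "real (r j) \<noteq> 0" using r_pos[OF JJ_le(1)[OF j]] by simp
    show "real_of_int (d j) / ww c j = (CC * c * (real (r j) / ww c j) - real (r j)) / 2"
      using w rj unfolding ww_def mu_def by (simp add: field_simps)
  qed
  also have "\<dots> = (CC * c * (\<Sum>j\<in>JJ. real (r j) / ww c j) - (\<Sum>j\<in>JJ. real (r j))) / 2"
    by (simp add: sum_divide_distrib[symmetric] sum_subtractf sum_distrib_left)
  finally show ?thesis unfolding SJ_def RJ_def .
qed

end

lemma gen_cr: fixes X Y a11 a12 a21 a22 b1 b2 :: real
  assumes "X \<noteq> 0" "Y \<noteq> 0"
  shows "a11 / X * (a22 / Y) - a12 / X * (a21 / Y) = (a11 * a22 - a12 * a21) / (X * Y)"
    "(b1 / X * (a22 / Y) - a12 / X * (b2 / Y)) / (a11 / X * (a22 / Y) - a12 / X * (a21 / Y))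
       = (b1 * a22 - a12 * b2) / (a11 * a22 - a12 * a21)"
    "(a11 / X * (b2 / Y) - a21 / Y * (b1 / X)) / (a11 / X * (a22 / Y) - a12 / X * (a21 / Y))
       = (a11 * b2 - a21 * b1) / (a11 * a22 - a12 * a21)"
proof -
  show D: "a11 / X * (a22 / Y) - a12 / X * (a21 / Y) = (a11 * a22 - a12 * a21) / (X * Y)"
    using assms by (simp add: field_simps)
  have N1: "b1 / X * (a22 / Y) - a12 / X * (b2 / Y) = (b1 * a22 - a12 * b2) / (X * Y)"
    using assms by (simp add: field_simps)
  have N2: "a11 / X * (b2 / Y) - a21 / Y * (b1 / X) = (a11 * b2 - a21 * b1) / (X * Y)"
    using assms by (simp add: field_simps)
  show "(b1 / X * (a22 / Y) - a12 / X * (b2 / Y)) / (a11 / X * (a22 / Y) - a12 / X * (a21 / Y))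
       = (b1 * a22 - a12 * b2) / (a11 * a22 - a12 * a21)"
    unfolding D N1 using assms by simp
  show "(a11 / X * (b2 / Y) - a21 / Y * (b1 / X)) / (a11 / X * (a22 / Y) - a12 / X * (a21 / Y))
       = (a11 * b2 - a21 * b1) / (a11 * a22 - a12 * a21)"
    unfolding D N2 using assms by simp
qed

lemma gen_phi: fixes d0 d1 Nb Na Dp Q :: real
  assumes "Dp \<noteq> 0"
  shows "d1 - (Nb / Dp * (- (d0 + d1)) + Na / Dp * (Q / 2)) = (2 * d1 * Dp + 2 * (d0 + d1) * Nb - Q * Na) / (2 * Dp)"
  using assms by (simp add: field_simps)

lemma gen_dn: fixes c n r0 r1 u0 u1 S C w0 w1 :: real
  assumes "c \<noteq> 0" "w0 \<noteq> 0" "w1 \<noteq> 0" "w0 = C * c - 2 * u0" "w1 = C * c - 2 * u1"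
  shows "(r0 * (C - 2 * u0 * (1 / c)) + r1 * (C - 2 * u1 * (1 / c))) * ((C - 2 * u0 * (1 / c)) * (C - 2 * u1 * (1 / c)))
     * (1 + n / 2 - n / 2 * (c * (S + r0 / w0 + r1 / w1))) + 2 * n * (1 / c)^2 * (u0 - u1)^2 * r0 * r1
   = ((r0 * w0 + r1 * w1) * ((2 + n) * w0 * w1 - n * c * (S * w0 * w1 + r0 * w1 + r1 * w0)) + 4 * n * c * (u0 - u1)^2 * r0 * r1)
     / (2 * c^3)"
proof -
  have e0: "C - 2 * u0 * (1 / c) = w0 / c" and e1: "C - 2 * u1 * (1 / c) = w1 / c"
    using assms by (simp_all add: field_simps)
  show ?thesis unfolding e0 e1 using assms(1-3) by (simp add: field_simps power2_eq_square power3_eq_cube; Groebner_Basis.algebra)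
qed

lemma gen_fin0: fixes K F n c G u0 u1 r0 r1 w0 w1 D2 N1 :: real
  assumes "F \<noteq> 0" "N1 \<noteq> 0" "c \<noteq> 0" "D2 \<noteq> 0"
  shows "K * (2 * (1 - G) - 2 * n * c) / F * K * n / (N1 * F)
       * (4 * (- (2 * N1) * c * (u0 - u1) * r0 * r1 * w0 * w1) / (2 * D2))
     = (u0 - u1) * c * (4 * K^2 * n * N1 * r0 * r1 / (F * (N1 * F))
       * (n - (1 - G) * (1 / c)) * (w0 / c * (w1 / c)) * inverse (D2 / (2 * c^3)))"
proof -
  have i: "inverse (D2 / (2 * c^3)) = 2 * c^3 / D2" by simp
  have m: "n - (1 - G) * (1 / c) = (n * c - (1 - G)) / c" using assms(3) by (simp add: field_simps)
  have L: "K * (2 * (1 - G) - 2 * n * c) / F * K * n / (N1 * F)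
       * (4 * (- (2 * N1) * c * (u0 - u1) * r0 * r1 * w0 * w1) / (2 * D2))
     = (K * K * n * (n * c - (1 - G)) * 8 * c * (u0 - u1) * r0 * r1 * w0 * w1) / (F * F * D2)"
    using assms by (simp add: field_simps; simp add: algebra_simps)
  have R: "(u0 - u1) * c * (4 * K^2 * n * N1 * r0 * r1 / (F * (N1 * F))
       * ((n * c - (1 - G)) / c) * (w0 / c * (w1 / c)) * (2 * c^3 / D2))
     = (K * K * n * (n * c - (1 - G)) * 8 * c * (u0 - u1) * r0 * r1 * w0 * w1) / (F * F * D2)"
    using assms by (simp add: field_simps power2_eq_square power3_eq_cube; simp add: algebra_simps)
  show ?thesis unfolding i m R L ..
qed

lemma gen_div: fixes Np D2 M Dp :: real
  assumes "Np * D2 = M * Dp" "Dp \<noteq> 0" "D2 \<noteq> 0"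
  shows "Np / (2 * Dp) = M / (2 * D2)"
proof -
  have "Np * (2 * D2) = M * (2 * Dp)" using assms(1) by (simp add: algebra_simps)
  then show ?thesis using assms(2,3) by (simp add: frac_eq_eq)
qed

lemma gen_fin: fixes K F n c G u0 u1 r0 r1 w0 w1 D2 :: real
  assumes "F \<noteq> 0" "n + 1 \<noteq> 0" "c \<noteq> 0" "D2 \<noteq> 0"
  shows "K * (2 * (1 - G) - 2 * n * c) / F * K * n / ((n + 1) * F)
       * (4 * (- (2 * n + 2) * c * (u0 - u1) * r0 * r1 * w0 * w1) / (2 * D2))
     = (u0 - u1) * c * (4 * K^2 * n * (n + 1) * r0 * r1 / (F * ((n + 1) * F))
       * (n - (1 - G) * (1 / c)) * (w0 / c * (w1 / c)) * inverse (D2 / (2 * c^3)))"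
proof -
  have e: "2 * n + 2 = 2 * (n + 1)" by simp
  show ?thesis unfolding e by (rule gen_fin0[OF assms(1,2,3,4)])
qed

context P318 begin

definition "AA11 c = ZZ - CC * nn * c * SJ c + nn * RJ"
definition "AA12 = 2 * nn * (dd0 + dd1)"
definition "AA21 c = nn * nn * c * SJ c - CC * RJ"
definition "AA22 c = ZZ * nn * c + nn * nn * c * RJ - CC * CC * c * RJ - 2 * CC * (dd0 + dd1)"
definition "BB1 = - 2 * nn * dd1"
definition "BB2 c = rr1 * c * (nn * nn - CC * CC) + 2 * CC * dd1"

lemma cc_forms: assumes "c \<noteq> 0"
  shows "cc11 c = AA11 c / ZZ" "cc12 c = AA12 / ZZ" "cc21 c = AA21 c / (ZZ * nn * c)"
    "cc22 c = AA22 c / (ZZ * nn * c)" "ee1 c = BB1 / ZZ" "ee2 c = BB2 c / (ZZ * nn * c)"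
proof -
  note m = m_forms[OF assms]
  note nzs = assms nz1 ZZ_eq(2) CC_nz
  show "cc11 c = AA11 c / ZZ" unfolding cc11_def AA11_def m using nzs by (simp add: field_simps)
  show "cc12 c = AA12 / ZZ" unfolding cc12_def AA12_def m PJ_eq using nzs by (simp add: field_simps)
  show "cc21 c = AA21 c / (ZZ * nn * c)" unfolding cc21_def AA21_def m using nzs by (simp add: field_simps)
  show "cc22 c = AA22 c / (ZZ * nn * c)" unfolding cc22_def AA22_def m PJ_eq using nzs by (simp add: field_simps)
  show "ee1 c = BB1 / ZZ" unfolding ee1_def BB1_def m ww_def dd_eq u1_def[symmetric] rr1_def[symmetric]
    using nzs by (simp add: field_simps)
  show "ee2 c = BB2 c / (ZZ * nn * c)" unfolding ee2_def BB2_def m ww_def dd_eq u1_def[symmetric] rr1_def[symmetric]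
    using nzs by (simp add: field_simps)
qed

definition "wh t j = CC - 2 * mu r d j * t"
definition "Sh t = (\<Sum>j\<le>l. real (r j) * inverse (wh t j))"
definition "Qf t = 1 + nn / 2 - nn / 2 * Sh t"
definition "Dn t = (rr0 * wh t 0 + rr1 * wh t 1) * (wh t 0 * wh t 1) * Qf t + 2 * nn * t^2 * (u0 - u1)^2 * rr0 * rr1"
definition "HK = 4 * KK^2 * nn * (nn + 1) * rr0 * rr1 / (FF * ((nn + 1) * FF))"
definition "Hf g t = HK * (nn - (1 - real_of_int g) * t) * (wh t 0 * wh t 1) * inverse (Dn t)"

lemma Sh_c: assumes "good c"
  shows "Sh (1 / c) = c * (SJ c + rr0 / ww c 0 + rr1 / ww c 1)"
proof -
  have c0: "c \<noteq> 0" using assms by (simp add: good_def)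
  have t: "real (r j) * inverse (wh (1 / c) j) = c * (real (r j) / ww c j)" if "j \<le> l" for j
  proof -
    have "wh (1 / c) j = ww c j / c" unfolding wh_def ww_def using c0 by (simp add: field_simps)
    then show ?thesis by simp
  qed
  have "{..l} = {0,1} \<union> JJ" using l2 by (auto simp: JJ_def)
  then have "Sh (1 / c) = (\<Sum>k\<in>{0,1}. real (r k) * inverse (wh (1 / c) k)) + (\<Sum>k\<in>JJ. real (r k) * inverse (wh (1 / c) k))"
    unfolding Sh_def by (simp add: sum.union_disjoint JJ_def)
  also have "\<dots> = (\<Sum>k\<in>{0,1}. c * (real (r k) / ww c k)) + (\<Sum>k\<in>JJ. c * (real (r k) / ww c k))"
    using t l2 JJ_le by (intro arg_cong2[where f = "(+)"] sum.cong) auto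
  finally show ?thesis by (simp add: SJ_def sum_distrib_left rr0_def rr1_def algebra_simps)
qed

lemma main_id: assumes "good c" "Dn (1 / c) \<noteq> 0"
  shows "Fring l r d g c = (mu r d 0 - mu r d 1) * c * Hf g (1 / c)"
proof -
  have c0: "c \<noteq> 0" using assms by (simp add: good_def)
  have w0: "ww c 0 \<noteq> 0" and w1: "ww c 1 \<noteq> 0" using wnz[OF assms(1)] l2 by auto
  note cf = cc_forms[OF c0]
  have XY: "ZZ \<noteq> 0" "ZZ * nn * c \<noteq> 0" using ZZ_eq(2) nz1 c0 by auto
  define Dp where "Dp = AA11 c * AA22 c - AA12 * AA21 c"
  have Dl: "Dl c = Dp / (ZZ * (ZZ * nn * c))" unfolding Dl_def cf Dp_def using gen_cr(1)[OF XY] by simp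
  have Dp0: "Dp \<noteq> 0" using Dl assms(1) by (auto simp: good_def)
  have aa: "aa c = (BB1 * AA22 c - AA12 * BB2 c) / Dp" unfolding aa_def Dl_def cf Dp_def using gen_cr(2)[OF XY] by simp
  have bb: "bb c = (AA11 c * BB2 c - AA21 c * BB1) / Dp" unfolding bb_def Dl_def cf Dp_def using gen_cr(3)[OF XY] by simp
  have T: "(\<Sum>s\<in>JJ. real_of_int (d s) * ys c s) = bb c * (- (dd0 + dd1)) + aa c * ((CC * c * SJ c - RJ) / 2)"
  proof -
    have "(\<Sum>s\<in>JJ. real_of_int (d s) * ys c s) = bb c * (\<Sum>s\<in>JJ. real_of_int (d s)) + aa c * (\<Sum>s\<in>JJ. real_of_int (d s) / ww c s)"
      unfolding ys_def by (simp add: algebra_simps sum.distrib sum_distrib_left)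
    then show ?thesis unfolding dsplit SdJ[OF assms(1)] .
  qed
  define D2 where "D2 = (rr0 * ww c 0 + rr1 * ww c 1) * ((2 + nn) * ww c 0 * ww c 1 - nn * c * (SJ c * ww c 0 * ww c 1 + rr0 * ww c 1 + rr1 * ww c 0)) + 4 * nn * c * (u0 - u1)^2 * rr0 * rr1"
  have Dn: "Dn (1 / c) = D2 / (2 * c^3)"
    unfolding Dn_def Qf_def Sh_c[OF assms(1)] D2_def wh_def u0_def[symmetric] u1_def[symmetric]
    by (rule gen_dn[OF c0 w0 w1]) (simp_all add: ww_def u0_def u1_def)
  have D20: "D2 \<noteq> 0" using assms(2) unfolding Dn by simp
  have PI: "(2 * dd1 * Dp + 2 * (dd0 + dd1) * (AA11 c * BB2 c - AA21 c * BB1) - (CC * c * SJ c - RJ) * (BB1 * AA22 c - AA12 * BB2 c)) * D2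
     = 4 * (- (2 * nn + 2) * c * (u0 - u1) * rr0 * rr1 * ww c 0 * ww c 1) * Dp"
    unfolding Dp_def D2_def
    by (rule poly_id2[where c = c and n = nn and ?r0.0 = rr0 and ?r1.0 = rr1 and ?u0.0 = u0 and ?u1.0 = u1
       and S = "SJ c" and C = CC and R = RJ and ?d0.0 = dd0 and ?d1.0 = dd1 and ?w0.0 = "ww c 0" and ?w1.0 = "ww c 1"
       and Z = ZZ and ?A11.0 = "AA11 c" and ?A12.0 = AA12 and ?A21.0 = "AA21 c" and ?A22.0 = "AA22 c"
       and ?B1.0 = BB1 and ?B2.0 = "BB2 c"])
       (simp_all add: CC_def RJ_eq dd_eq ww_def u0_def u1_def ZZ_def AA11_def AA12_def AA21_def AA22_def BB1_def BB2_def)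
  have "Fring l r d g c = gam g c * (dd1 - (bb c * (- (dd0 + dd1)) + aa c * ((CC * c * SJ c - RJ) / 2)))"
    unfolding Fring_eq[OF assms(1)] T dd1_def ..
  also have "dd1 - (bb c * (- (dd0 + dd1)) + aa c * ((CC * c * SJ c - RJ) / 2))
      = (2 * dd1 * Dp + 2 * (dd0 + dd1) * (AA11 c * BB2 c - AA21 c * BB1) - (CC * c * SJ c - RJ) * (BB1 * AA22 c - AA12 * BB2 c)) / (2 * Dp)"
    unfolding aa bb by (rule gen_phi[OF Dp0])
  also have "\<dots> = 4 * (- (2 * nn + 2) * c * (u0 - u1) * rr0 * rr1 * ww c 0 * ww c 1) / (2 * D2)"
    by (rule gen_div[OF PI Dp0 D20])
  finally have F: "Fring l r d g c = gam g c * (4 * (- (2 * nn + 2) * c * (u0 - u1) * rr0 * rr1 * ww c 0 * ww c 1) / (2 * D2))" .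
  have whc: "wh (1 / c) 0 = ww c 0 / c" "wh (1 / c) 1 = ww c 1 / c"
    unfolding wh_def ww_def using c0 by (simp_all add: field_simps)
  show ?thesis unfolding F Hf_def Dn HK_def whc gam_def u0_def[symmetric] u1_def[symmetric]
    by (rule gen_fin[OF nz1(4) nz1(1) c0 D20])
qed

end


lemma fut1_gen: fixes K F n N1 C r0 r1 R01 HK Q0 D0 :: real
  assumes "K \<noteq> 0" "F \<noteq> 0" "n \<noteq> 0" "N1 \<noteq> 0" "C \<noteq> 0" "R01 \<noteq> 0"
    "HK = 4 * K^2 * n * N1 * r0 * r1 / (F * (N1 * F))" "Q0 = 2 * N1 / C" "D0 = C * R01 * C^2 * Q0"
  shows "HK * n * C^2 / D0 = 2 * K^2 * n * r0 * r1 / (F / n * (N1 * F) * R01)"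
  unfolding assms(7-9) using assms(1-6) by (simp add: field_simps power2_eq_square)

lemma fut2_gen: fixes K F n N1 C r0 r1 R01 HK Q0 D0 D1 u0 u1 d01 G :: real
  assumes "K \<noteq> 0" "F \<noteq> 0" "n \<noteq> 0" "N1 \<noteq> 0" "C \<noteq> 0" "R01 \<noteq> 0"
    "HK = 4 * K^2 * n * N1 * r0 * r1 / (F * (N1 * F))" "Q0 = 2 * N1 / C" "D0 = C * R01 * C^2 * Q0"
    "D1 = (C * R01 * (- 2 * C * (u0 + u1)) + (- 2 * d01) * C^2) * Q0"
  shows "(HK * n * C^2) * (- D1 / D0^2) + (HK * (n * (- 2 * C * (u0 + u1)) - (1 - G) * C^2)) * (1 / D0)
    = 2 * r0 * r1 * K^2 / (F / n * (C * N1 * F) * R01) * (C * (G - 1) + 2 * n * (d01 / R01))"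
  unfolding assms(7-10) using assms(1-6) by (simp add: field_simps power2_eq_square; Groebner_Basis.algebra)

lemma inv_nth1: fixes f :: "real fps" assumes "fps_nth f 0 \<noteq> 0"
  shows "fps_nth (inverse f) (Suc 0) = - (fps_nth f (Suc 0)) / (fps_nth f 0)^2"
proof -
  have "fps_nth (inverse f * f) (Suc 0) = 0" using inverse_mult_eq_1[OF assms] by simp
  then have "inverse (fps_nth f 0) * fps_nth f (Suc 0) + fps_nth (inverse f) (Suc 0) * fps_nth f 0 = 0" by simp
  then show ?thesis using assms by (simp add: field_simps power2_eq_square)
qed

context P318 begin

definition "WH j = fps_const CC - fps_const (2 * mu r d j) * fps_X"
definition "SHF = (\<Sum>j\<le>l. fps_const (real (r j)) * inverse (WH j))"
definition "QF = fps_const (1 + nn / 2) - fps_const (nn / 2) * SHF"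
definition "DNF = (fps_const rr0 * WH 0 + fps_const rr1 * WH 1) * (WH 0 * WH 1) * QF
   + fps_const (2 * nn) * fps_X ^ 2 * fps_const ((u0 - u1)^2) * fps_const rr0 * fps_const rr1"
definition "HFF g = fps_const HK * (fps_const nn - fps_const (1 - real_of_int g) * fps_X) * (WH 0 * WH 1) * inverse DNF"

lemma CC_pos: "CC > 0" using nn_ge by (simp add: CC_def)

lemma wh_exp: "(\<lambda>t. wh t j) has_fps_expansion WH j"
  unfolding wh_def WH_def by (intro fps_expansion_intros)

lemma WH_nth: "fps_nth (WH j) 0 = CC" "fps_nth (WH j) (Suc 0) = - 2 * mu r d j"
  by (simp_all add: WH_def)

lemma Sh_exp: "(\<lambda>t. Sh t) has_fps_expansion SHF"
  unfolding Sh_def SHF_def using CC_pos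
  by (intro fps_expansion_intros wh_exp) (simp add: WH_nth)

lemma Qf_exp: "(\<lambda>t. Qf t) has_fps_expansion QF"
  unfolding Qf_def QF_def by (intro fps_expansion_intros Sh_exp)

lemma Dn_exp: "(\<lambda>t. Dn t) has_fps_expansion DNF"
  unfolding Dn_def DNF_def by (intro fps_expansion_intros Qf_exp wh_exp)


lemma invWH_nth: "fps_nth (inverse (WH j)) 0 = 1 / CC" "fps_nth (inverse (WH j)) (Suc 0) = 2 * mu r d j / CC^2"
  using CC_pos by (simp_all add: WH_nth inv_nth1 field_simps)

lemma SHF_nth: "fps_nth SHF 0 = nn / CC" "fps_nth SHF (Suc 0) = 0"
proof -
  have "fps_nth SHF 0 = (\<Sum>j\<le>l. real (r j) / CC)"
    unfolding SHF_def fps_sum_nth by (simp add: WH_nth divide_inverse)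
  also have "\<dots> = nn / CC" by (simp add: sum_divide_distrib[symmetric] nn_def rV_def)
  finally show "fps_nth SHF 0 = nn / CC" .
  have "fps_nth SHF (Suc 0) = (\<Sum>j\<le>l. 2 * real_of_int (d j) / CC^2)"
    unfolding SHF_def fps_sum_nth
  proof (intro sum.cong refl)
    fix j assume "j \<in> {..l}"
    then have "real (r j) \<noteq> 0" using r_pos by fastforce
    then show "fps_nth (fps_const (real (r j)) * inverse (WH j)) (Suc 0) = 2 * real_of_int (d j) / CC^2"
      by (simp add: fps_mult_nth_1 invWH_nth mu_def)
  qed
  also have "\<dots> = 2 * (\<Sum>j\<le>l. real_of_int (d j)) / CC^2"
    by (simp add: sum_divide_distrib[symmetric] sum_distrib_left)
  also have "(\<Sum>j\<le>l. real_of_int (d j)) = 0" using dsum by (metis of_int_0 of_int_sum)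
  finally show "fps_nth SHF (Suc 0) = 0" by simp
qed

definition "Q0 = 2 * (nn + 1) / CC"

lemma QF_nth: "fps_nth QF 0 = Q0" "fps_nth QF (Suc 0) = 0"
proof -
  show "fps_nth QF 0 = Q0" unfolding QF_def Q0_def using CC_pos
    by (simp add: SHF_nth field_simps CC_def; simp add: algebra_simps)
  show "fps_nth QF (Suc 0) = 0" unfolding QF_def by (simp add: fps_mult_nth_1 SHF_nth)
qed

lemma Q0_pos: "Q0 > 0" using CC_pos nn_ge by (simp add: Q0_def)

lemma DNF_nth: "fps_nth DNF 0 = CC * (rr0 + rr1) * CC^2 * Q0"
  "fps_nth DNF (Suc 0) = (CC * (rr0 + rr1) * (- 2 * CC * (u0 + u1)) + (- 2 * (dd0 + dd1)) * CC^2) * Q0"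
proof -
  have w: "fps_nth (WH 0) (Suc 0) = - 2 * u0" "fps_nth (WH 1) (Suc 0) = - 2 * u1" by (simp_all add: WH_nth u0_def u1_def)
  show "fps_nth DNF 0 = CC * (rr0 + rr1) * CC^2 * Q0" unfolding DNF_def
    by (simp add: WH_nth QF_nth algebra_simps power2_eq_square)
  show "fps_nth DNF (Suc 0) = (CC * (rr0 + rr1) * (- 2 * CC * (u0 + u1)) + (- 2 * (dd0 + dd1)) * CC^2) * Q0"
    unfolding DNF_def by (simp add: fps_mult_nth_1 WH_nth QF_nth dd_eq algebra_simps power2_eq_square u0_def u1_def)
qed

lemma rr_pos: "rr0 > 0" "rr1 > 0" using r_pos[of 0] r_pos[of 1] l2 by (auto simp: rr0_def rr1_def)

lemma DNF0_nz: "fps_nth DNF 0 \<noteq> 0"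
  unfolding DNF_nth using CC_pos Q0_pos rr_pos by simp

lemma Hf_exp: "(\<lambda>t. Hf g t) has_fps_expansion HFF g"
  unfolding Hf_def HFF_def using DNF0_nz by (intro fps_expansion_intros wh_exp Dn_exp)


definition "D0 = CC * (rr0 + rr1) * CC^2 * Q0"
definition "D1 = (CC * (rr0 + rr1) * (- 2 * CC * (u0 + u1)) + (- 2 * (dd0 + dd1)) * CC^2) * Q0"

lemma HFF_nth0: "fps_nth (HFF g) 0 = HK * nn * CC^2 / D0"
  unfolding HFF_def D0_def using DNF_nth(1) by (simp add: WH_nth power2_eq_square divide_inverse)

lemma HFF_nth1: "fps_nth (HFF g) (Suc 0) = (HK * nn * CC^2) * (- D1 / D0^2)
    + (HK * (nn * (- 2 * CC * (u0 + u1)) - (1 - real_of_int g) * CC^2)) * (1 / D0)"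
proof -
  have i1: "fps_nth (inverse DNF) (Suc 0) = - D1 / D0^2" using inv_nth1[OF DNF0_nz] DNF_nth D0_def D1_def by simp
  have i0: "fps_nth (inverse DNF) 0 = 1 / D0" using DNF_nth D0_def by (simp add: divide_inverse)
  show ?thesis unfolding HFF_def fps_mult_nth_1' i1 i0
    by (simp add: WH_nth u0_def u1_def algebra_simps power2_eq_square)
qed

end


lemma fps_tail: fixes F :: "real fps" assumes "fps_conv_radius F > 0"
  shows "\<exists>M \<delta>. \<delta> > 0 \<and> (\<forall>t. \<bar>t\<bar> < \<delta> \<longrightarrow> \<bar>eval_fps F t - (\<Sum>k<N. fps_nth F k * t^k)\<bar> \<le> M * \<bar>t\<bar>^N)"
proof -
  obtain e where e: "0 < ereal e" "ereal e < fps_conv_radius F" using ereal_dense2[OF assms] by blast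
  have e0: "e > 0" using e(1) by simp
  let ?G = "fps_shift N F"
  have dec: "eval_fps F t = (\<Sum>k<N. fps_nth F k * t^k) + t^N * eval_fps ?G t" if "norm t < fps_conv_radius F" for t
  proof -
    have s1: "(\<lambda>n. fps_nth ?G n * t^n) sums eval_fps ?G t" using sums_eval_fps[of t ?G] that by simp
    have s2: "(\<lambda>n. fps_nth F (n + N) * t^(n + N)) sums (t^N * eval_fps ?G t)"
      using sums_mult[OF s1, of "t^N"] by (simp add: power_add mult_ac)
    have "(\<lambda>n. fps_nth F n * t^n) sums (t^N * eval_fps ?G t + (\<Sum>k<N. fps_nth F k * t^k))"
      using s2 sums_iff_shift[of "\<lambda>n. fps_nth F n * t^n" N] by simp
    with sums_eval_fps[OF that] show ?thesis by (simp add: sums_unique2 add.commute)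
  qed
  have "norm (0::real) < fps_conv_radius ?G" using assms by (simp add: zero_ereal_def)
  then have "isCont (eval_fps ?G) 0" by (rule continuous_eval_fps)
  then have "eval_fps ?G \<midarrow>0\<rightarrow> eval_fps ?G 0" by (simp add: isCont_def)
  from LIM_D[OF this, of 1] obtain d where
    d: "d > 0" "\<And>x. x \<noteq> 0 \<and> norm (x - 0) < d \<longrightarrow> norm (eval_fps ?G x - eval_fps ?G 0) < 1"
    by auto
  have bnd: "\<bar>eval_fps ?G t\<bar> \<le> \<bar>eval_fps ?G 0\<bar> + 1" if "\<bar>t\<bar> < d" for t
  proof (cases "t = 0")
    case True then show ?thesis by simp
  next
    case False then have "\<bar>eval_fps ?G t - eval_fps ?G 0\<bar> < 1" using d(2)[of t] that by simp
    then show ?thesis by linarith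
  qed
  show ?thesis
  proof (intro exI conjI allI impI)
    show "min e d > 0" using e0 d by simp
    fix t :: real assume t: "\<bar>t\<bar> < min e d"
    have "ereal (norm t) < ereal e" using t by simp
    then have "norm t < fps_conv_radius F" using e(2) by (meson less_trans)
    then have "\<bar>eval_fps F t - (\<Sum>k<N. fps_nth F k * t^k)\<bar> = \<bar>t\<bar>^N * \<bar>eval_fps ?G t\<bar>"
      using dec by (simp add: abs_mult power_abs)
    also have "\<dots> \<le> \<bar>t\<bar>^N * (\<bar>eval_fps ?G 0\<bar> + 1)" using bnd t by (intro mult_left_mono) auto
    finally show "\<bar>eval_fps F t - (\<Sum>k<N. fps_nth F k * t^k)\<bar> \<le> (\<bar>eval_fps ?G 0\<bar> + 1) * \<bar>t\<bar>^N"
      by (simp add: mult.commute)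
  qed
qed



lemma lim1c: "((\<lambda>c::real. 1 / c) \<longlongrightarrow> 0) at_top"
  by (rule tendsto_divide_0[OF tendsto_const filterlim_at_top_imp_at_infinity[OF filterlim_ident]])

context P318 begin

lemma ev_w: "eventually (\<lambda>c. c > 0 \<and> (\<forall>j\<in>{..l}. ww c j > 0)) at_top"
proof -
  have "\<forall>j\<in>{..l}. eventually (\<lambda>c. ww c j > 0) at_top"
  proof
    fix j
    show "eventually (\<lambda>c. ww c j > 0) at_top"
      using eventually_ge_at_top[of "(2 * \<bar>mu r d j\<bar> + 1) / CC"]
    proof (rule eventually_mono)
      fix c assume "(2 * \<bar>mu r d j\<bar> + 1) / CC \<le> c"
      then have "2 * \<bar>mu r d j\<bar> + 1 \<le> CC * c" using CC_pos by (simp add: field_simps)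
      then show "ww c j > 0" unfolding ww_def by linarith
    qed
  qed
  then have "eventually (\<lambda>c. \<forall>j\<in>{..l}. ww c j > 0) at_top" by (rule eventually_ball_finite[rotated]) simp
  moreover have "eventually (\<lambda>c. c > (0::real)) at_top" by (rule eventually_gt_at_top)
  ultimately show ?thesis by eventually_elim auto
qed

definition "sJf c = (\<Sum>j\<in>JJ. real (r j) / (CC - 2 * mu r d j * (1 / c)))"

lemma sJ_lim: "(sJf \<longlongrightarrow> RJ / CC) at_top"
proof -
  have "(sJf \<longlongrightarrow> (\<Sum>j\<in>JJ. real (r j) / (CC - 2 * mu r d j * 0))) at_top"
    unfolding sJf_def using CC_pos by (intro tendsto_intros lim1c) auto
  then show ?thesis by (simp add: RJ_def sum_divide_distrib)
qed

lemma cS_eq: assumes "c > 0" "\<forall>j\<in>{..l}. ww c j > 0" shows "c * SJ c = sJf c"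
  unfolding SJ_def sJf_def sum_distrib_left
proof (intro sum.cong refl)
  fix j assume j: "j \<in> JJ"
  have "ww c j > 0" using assms(2) JJ_le(1)[OF j] by simp
  then have w: "ww c j \<noteq> 0" by simp
  show "c * (real (r j) / ww c j) = real (r j) / (CC - 2 * mu r d j * (1 / c))"
    using w assms(1) unfolding ww_def by (simp add: field_simps)
qed

definition "dlf s t = ((ZZ - CC * nn * s + nn * RJ) * (ZZ * nn + nn * nn * RJ - CC * CC * RJ - 2 * CC * (dd0 + dd1) * t)
   - AA12 * (nn * nn * s - CC * RJ) * t) / (ZZ * ZZ * nn)"

lemma Dl_eq: assumes "c \<noteq> 0" shows "Dl c = dlf (c * SJ c) (1 / c)"
  unfolding Dl_def cc_forms[OF assms] dlf_def AA11_def AA22_def AA21_def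
  using assms nz1 ZZ_eq(2) by (simp add: field_simps)

lemma dlf_lim: "dlf (RJ / CC) 0 = (rr0 + rr1) / nn"
proof -
  have C2: "CC * CC = nn * nn + ZZ" by (simp add: CC_def ZZ_def algebra_simps)
  have "dlf (RJ / CC) 0 = (ZZ * (ZZ * nn + nn * nn * RJ - CC * CC * RJ)) / (ZZ * ZZ * nn)"
    unfolding dlf_def using CC_nz ZZ_eq(2) nz1 by simp
  also have "\<dots> = (ZZ * (ZZ * (nn - RJ))) / (ZZ * ZZ * nn)" unfolding C2 by (simp add: algebra_simps)
  also have "\<dots> = (nn - RJ) / nn" using ZZ_eq(2) nz1 by simp
  finally show ?thesis by (simp add: RJ_eq)
qed

lemma ev_Dl: "eventually (\<lambda>c. Dl c > 0) at_top"
proof -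
  have "((\<lambda>c. dlf (sJf c) (1 / c)) \<longlongrightarrow> dlf (RJ / CC) 0) at_top"
    unfolding dlf_def using ZZ_eq(2) nz1 by (intro tendsto_intros sJ_lim lim1c) simp
  moreover have "dlf (RJ / CC) 0 > 0" unfolding dlf_lim using rr_pos nn_ge by simp
  ultimately have "eventually (\<lambda>c. dlf (sJf c) (1 / c) > 0) at_top" by (rule order_tendstoD(1))
  with ev_w show ?thesis
  proof eventually_elim
    case (elim c)
    then show ?case using Dl_eq[of c] cS_eq[of c] by simp
  qed
qed

lemma ev_Dn: "eventually (\<lambda>c. Dn (1 / c) \<noteq> 0) at_top"
proof -
  have "continuous (at 0 within UNIV) Dn" by (rule has_fps_expansion_imp_continuous[OF Dn_exp])
  then have ic: "isCont Dn 0" by simp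
  have "eventually (\<lambda>z. eval_fps DNF z = Dn z) (nhds 0)" using Dn_exp by (simp add: has_fps_expansion_def)
  then have "eval_fps DNF 0 = Dn 0" by (rule eventually_nhds_x_imp_x)
  then have "Dn 0 \<noteq> 0" using DNF0_nz by (simp add: eval_fps_at_0)
  moreover have "((\<lambda>c. Dn (1 / c)) \<longlongrightarrow> Dn 0) at_top" by (rule isCont_tendsto_compose[OF ic lim1c])
  ultimately show ?thesis using tendsto_imp_eventually_ne by blast
qed

lemma ev_good: "eventually (\<lambda>c. good c \<and> Dn (1 / c) \<noteq> 0) at_top"
  using ev_w ev_Dl ev_Dn
proof eventually_elim
  case (elim c) then show ?case by (auto simp: good_def)
qed

end



lemma powi1: fixes c :: real assumes "c \<noteq> 0" shows "c powi (1 - int N) = c * (1 / c)^N"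
proof -
  have "c powi (1 - int N) = c powi 1 / c powi (int N)" using assms by (rule power_int_diff[OF disjI1])
  also have "\<dots> = c / c^N" by simp
  also have "\<dots> = c * (1 / c)^N" by (simp add: power_one_over)
  finally show ?thesis .
qed

lemma sumpow: fixes c :: real assumes "c \<noteq> 0"
  shows "(\<Sum>i=1..N. a (i - 1) * c powi (2 - int i)) = c * (\<Sum>k<N. a k * (1 / c)^k)"
proof -
  have "(\<Sum>i=1..N. a (i - 1) * c powi (2 - int i)) = (\<Sum>k<N. a k * c powi (2 - int (Suc k)))"
    using sum.atLeast1_atMost_eq[of "\<lambda>i. a (i - 1) * c powi (2 - int i)" N] by simp
  also have "\<dots> = (\<Sum>k<N. c * (a k * (1 / c)^k))"
  proof (intro sum.cong refl)
    fix k
    have "2 - int (Suc k) = 1 - int k" by simp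
    then show "a k * c powi (2 - int (Suc k)) = c * (a k * (1 / c)^k)" using powi1[OF assms, of k] by simp
  qed
  finally show ?thesis by (simp add: sum_distrib_left)
qed

theorem proposition3p18:
  fixes l :: nat and r :: "nat \<Rightarrow> nat" and d :: "nat \<Rightarrow> int" and g :: int
  assumes "l \<ge> 2"
    and "\<forall>k\<le>l. r k \<ge> 1"
    and "(\<Sum>k\<le>l. d k) = 0"
    and "g \<ge> 1"
  shows "\<exists>Fut :: nat \<Rightarrow> real.
     Fut 1 = 2 * piR l r ^ 2 * real (rV l r) * real (r 0) * real (r 1)
               / (fact (rV l r - 1) * fact (rV l r + 1) * real (r 0 + r 1))
   \<and> Fut 1 > 0
   \<and> Fut 2 = 2 * real (r 0) * real (r 1) * piR l r ^ 2
               / (fact (rV l r - 1) * fact (rV l r + 2) * real (r 0 + r 1))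
             * ((real (rV l r) + 2) * (real_of_int g - 1)
                + 2 * real (rV l r) * (real_of_int (d 0 + d 1) / real (r 0 + r 1)))
   \<and> (\<forall>N\<ge>1. (\<lambda>c. Fring l r d g c
                 - (mu r d 0 - mu r d 1) * (\<Sum>i=1..N. Fut i * c powi (2 - int i)))
             \<in> O[at_top](\<lambda>c. (mu r d 0 - mu r d 1) * c powi (1 - int N)))"
proof -
  interpret P318 l r d using assms(1-3) by unfold_locales auto
  define HF where "HF = HFF g"
  define Fut where "Fut i = fps_nth HF (i - 1)" for i
  have exp: "(\<lambda>t. Hf g t) has_fps_expansion HF" unfolding HF_def by (rule Hf_exp)
  have F1: "Fut 1 = 2 * piR l r ^ 2 * real (rV l r) * real (r 0) * real (r 1)
               / (fact (rV l r - 1) * fact (rV l r + 1) * real (r 0 + r 1))"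
  proof -
    have "Fut 1 = HK * nn * CC^2 / D0" unfolding Fut_def HF_def by (simp add: HFF_nth0)
    also have "\<dots> = 2 * KK^2 * nn * rr0 * rr1 / (FF / nn * ((nn + 1) * FF) * (rr0 + rr1))"
      using rr_pos by (intro fut1_gen) (auto simp: nz1 CC_nz HK_def Q0_def D0_def)
    finally show ?thesis unfolding KK_def[symmetric] rVn fact0 fact1 of_nat_add rr0_def[symmetric] rr1_def[symmetric] .
  qed
  have F1pos: "Fut 1 > 0" unfolding F1 using KK_pos FF_pos nn_ge r_pos[of 0] r_pos[of 1] assms(1)
    by (simp add: KK_def rVn fact0 fact1)
  have F2: "Fut 2 = 2 * real (r 0) * real (r 1) * piR l r ^ 2
               / (fact (rV l r - 1) * fact (rV l r + 2) * real (r 0 + r 1))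
             * ((real (rV l r) + 2) * (real_of_int g - 1)
                + 2 * real (rV l r) * (real_of_int (d 0 + d 1) / real (r 0 + r 1)))"
  proof -
    have "Fut 2 = fps_nth (HFF g) (Suc 0)" unfolding Fut_def HF_def by simp
    also have "\<dots> = 2 * rr0 * rr1 * KK^2 / (FF / nn * (CC * (nn + 1) * FF) * (rr0 + rr1))
        * (CC * (real_of_int g - 1) + 2 * nn * ((dd0 + dd1) / (rr0 + rr1)))"
      unfolding HFF_nth1 using rr_pos
      by (intro fut2_gen) (auto simp: nz1 CC_nz HK_def Q0_def D0_def D1_def)
    finally show ?thesis unfolding KK_def[symmetric] rVn fact0 fact2 of_nat_add of_int_add rr0_def[symmetric]
      rr1_def[symmetric] dd0_def[symmetric] dd1_def[symmetric] CC_def[symmetric] .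
  qed
  show ?thesis
  proof (intro exI[of _ Fut] conjI allI impI)
    show "Fut 1 = 2 * piR l r ^ 2 * real (rV l r) * real (r 0) * real (r 1)
               / (fact (rV l r - 1) * fact (rV l r + 1) * real (r 0 + r 1))" by (rule F1)
    show "Fut 1 > 0" by (rule F1pos)
    show "Fut 2 = 2 * real (r 0) * real (r 1) * piR l r ^ 2
               / (fact (rV l r - 1) * fact (rV l r + 2) * real (r 0 + r 1))
             * ((real (rV l r) + 2) * (real_of_int g - 1)
                + 2 * real (rV l r) * (real_of_int (d 0 + d 1) / real (r 0 + r 1)))" by (rule F2)
    fix N :: nat assume N: "N \<ge> 1"
    have rad: "fps_conv_radius HF > 0" and evq: "eventually (\<lambda>t. eval_fps HF t = Hf g t) (nhds 0)"
      using exp by (auto simp: has_fps_expansion_def)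
    obtain M e where e: "e > 0" and Mb: "\<And>t. \<bar>t\<bar> < e \<Longrightarrow> \<bar>eval_fps HF t - (\<Sum>k<N. fps_nth HF k * t^k)\<bar> \<le> M * \<bar>t\<bar>^N"
      using fps_tail[OF rad, of N] by blast
    obtain e1 where e1: "e1 > 0" and Hq: "\<And>t. dist t 0 < e1 \<Longrightarrow> eval_fps HF t = Hf g t"
      using evq unfolding eventually_nhds_metric by blast
    let ?dm = "mu r d 0 - mu r d 1"
    have "eventually (\<lambda>c. good c \<and> Dn (1 / c) \<noteq> 0 \<and> c > 1 / e \<and> c > 1 / e1) at_top"
      using ev_good eventually_gt_at_top[of "1 / e"] eventually_gt_at_top[of "1 / e1"]
      by eventually_elim auto
    then have "eventually (\<lambda>c. norm (Fring l r d g c - ?dm * (\<Sum>i=1..N. Fut i * c powi (2 - int i)))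
        \<le> \<bar>M\<bar> * norm (?dm * c powi (1 - int N))) at_top"
    proof eventually_elim
      case (elim c)
      then have c0: "c > 0" by (auto simp: good_def)
      have t1: "\<bar>1 / c\<bar> < e" using elim e c0 by (simp add: field_simps)
      have t2: "dist (1 / c) 0 < e1" using elim e1 c0 by (simp add: field_simps)
      have "Fring l r d g c - ?dm * (\<Sum>i=1..N. Fut i * c powi (2 - int i))
          = ?dm * c * (eval_fps HF (1 / c) - (\<Sum>k<N. fps_nth HF k * (1 / c)^k))"
        unfolding main_id[OF conjunct1[OF elim] conjunct1[OF conjunct2[OF elim]]] Hq[OF t2, symmetric]
        unfolding Fut_def sumpow[OF order.strict_implies_not_eq[OF c0, symmetric]] by (simp add: algebra_simps)
      also have "norm \<dots> = \<bar>?dm\<bar> * c * \<bar>eval_fps HF (1 / c) - (\<Sum>k<N. fps_nth HF k * (1 / c)^k)\<bar>"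
        using c0 by (simp add: abs_mult)
      also have "\<dots> \<le> \<bar>?dm\<bar> * c * (\<bar>M\<bar> * \<bar>1 / c\<bar>^N)"
      proof (rule mult_left_mono)
        have "M * \<bar>1 / c\<bar>^N \<le> \<bar>M\<bar> * \<bar>1 / c\<bar>^N" by (intro mult_right_mono) auto
        then show "\<bar>eval_fps HF (1 / c) - (\<Sum>k<N. fps_nth HF k * (1 / c)^k)\<bar> \<le> \<bar>M\<bar> * \<bar>1 / c\<bar>^N"
          using Mb[OF t1] by linarith
        show "0 \<le> \<bar>?dm\<bar> * c" using c0 by simp
      qed
      also have "\<dots> = \<bar>M\<bar> * norm (?dm * c powi (1 - int N))"
        using c0 by (simp add: powi1 abs_mult power_abs)
      finally show ?case .
    qed
    then show "(\<lambda>c. Fring l r d g c - (mu r d 0 - mu r d 1) * (\<Sum>i=1..N. Fut i * c powi (2 - int i)))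
             \<in> O[at_top](\<lambda>c. (mu r d 0 - mu r d 1) * c powi (1 - int N))"
      by (rule bigoI)
  qed
qed


end
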